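(* Let $0<s_1<s_2<1$, $2s_1<d<\frac{2s_1s_2}{s_2-s_1}$, $a>0$, and suppose $g$ satisfies $(G_1)$–$(G_3)$ and $V$ satisfies $(V_1)$–$(V_3)$. Then $J|_{\mathcal{P}_a}$ is coercive: $$\lim_{\substack{u\in\mathcal{P}_a,\\ |\nabla_{s_1}u|_2^2+|\nabla_{s_2}u|_2^2\to\infty}}J(u)=+\infty.$$
   Context: For $s\in(0,1)$, $|\nabla_s u|_2^2=\int_{\mathbb{R}^d\times\mathbb{R}^d}\frac{|u(x)-u(y)|^2}{|x-y|^{d+2s}}dx\,dy$; $|\cdot|_p$ is the $L^p(\mathbb{R}^d)$ norm; $H^{s_1,s_2}(\mathbb{R}^d)=\{u\in L^2(\mathbb{R}^d):|\nabla_{s_1}u|_2<\infty,\ |\nabla_{s_2}u|_2<\infty\}$. $S_a=\{u\in H^{s_1,s_2}(\mathbb{R}^d):|u|_2^2=a\}$. $g:\mathbb{R}\to\mathbb{R}$, $G(s)=\int_0^sg$, $\widetilde G(s)=\frac12g(s)s-G(s)$. $(G_1)$: $g$ continuous, odd. $(G_2)$: there exist $\alpha,\beta$ with $2+\frac{4s_2}{d}<\alpha<\beta<\frac{2d}{d-2s_1}$ and $\alpha G(s)\le g(s)s\le\beta G(s)$ for all $s$. $(G_3)$: $\widetilde G'$ exists and $\widetilde G'(s)s\ge\alpha\widetilde G(s)$ for all $s$. $(V_1)$: $\lim_{|x|\to\infty}V(x)=\sup V=0$ and there is $\sigma_1\in[0,\frac{d(\alpha-2)-4}{d(\alpha-2)}]$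 with $|\int Vu^2dx|\le\sigma_1(|\nabla_{s_1}u|_2^2+|\nabla_{s_2}u|_2^2)$ for all $u$. $(V_2)$: $\nabla V$ exists a.e.; $W(x)=\frac12\langle\nabla V(x),x\rangle$ satisfies $\lim_{|x|\to\infty}W(x)=0$ and there is $\sigma_2$ with $0<\sigma_2<\min\{s_1-\frac{(\beta-2)d}{2\beta},\frac{d(\alpha-2)(1-\sigma_1)}{4}-s_2\}$ and $|\int Wu^2dx|\le\sigma_2(|\nabla_{s_1}u|_2^2+|\nabla_{s_2}u|_2^2)$ for all $u$. $(V_3)$: $\nabla W$ exists a.e.; $Y(x)=(d\alpha/2-d-1)W(x)+\langle\nabla W(x),x\rangle$ satisfies $|\int Yu^2dx|\le\sigma_3(|\nabla_{s_1}u|_2^2+|\nabla_{s_2}u|_2^2)$ for all $u$, for some $\sigma_3\in[0,s_1^2(d\alpha/2-d-2s_2)]$. (All $u\in H^{s_1,s_2}(\mathbb{R}^d)$.) $J(u)=\frac12|\nabla_{s_1}u|_2^2+\frac12|\nabla_{s_2}u|_2^2+\frac12\int_{\mathbb{R}^d}V(x)u^2dx-\int_{\mathbb{R}^d}G(u)dx$; $P(u)=s_1|\nabla_{s_1}u|_2^2+s_2|\nabla_{s_2}u|_2^2-\frac12\int_{\mathbb{R}^d}\langle\nabla V(x),x\rangle u^2dx-d\int_{\mathbb{R}^d}\widetilde G(u)dx$; $\mathcal{P}_a=\{u\in S_a:P(u)=0\}$. *)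

theory Defs
  imports "HOL-Analysis.Analysis"
begin

text \<open>Dimension d is CARD('n); functions live on real^'n (Euclidean norm).\<close>

text \<open>Squared Gagliardo seminorm |nabla_s u|_2^2 (as an extended nonnegative real).\<close>
definition gag2 :: "real \<Rightarrow> (real^'n \<Rightarrow> real) \<Rightarrow> ennreal" where
  "gag2 s u = (\<integral>\<^sup>+ z. ennreal ((u (fst z) - u (snd z))\<^sup>2
        / norm (fst z - snd z) powr (real CARD('n) + 2 * s)) \<partial>(lborel \<Otimes>\<^sub>M lborel))"

definition L2sq :: "(real^'n \<Rightarrow> real) \<Rightarrow> ennreal" where
  "L2sq u = (\<integral>\<^sup>+ x. ennreal ((u x)\<^sup>2) \<partial>lborel)"

definition Hs :: "real \<Rightarrow> real \<Rightarrow> (real^'n \<Rightarrow> real) set" where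
  "Hs s1 s2 = {u. u \<in> borel_measurable lborel \<and> L2sq u < \<infinity>
                  \<and> gag2 s1 u < \<infinity> \<and> gag2 s2 u < \<infinity>}"

definition Sa :: "real \<Rightarrow> real \<Rightarrow> real \<Rightarrow> (real^'n \<Rightarrow> real) set" where
  "Sa s1 s2 a = {u \<in> Hs s1 s2. L2sq u = ennreal a}"

definition Gprim :: "(real \<Rightarrow> real) \<Rightarrow> real \<Rightarrow> real" where
  "Gprim g s = (LBINT t=0..s. g t)"

definition Gtil :: "(real \<Rightarrow> real) \<Rightarrow> real \<Rightarrow> real" where
  "Gtil g s = g s * s / 2 - Gprim g s"

definition Jfun :: "real \<Rightarrow> real \<Rightarrow> (real^'n \<Rightarrow> real) \<Rightarrow> (real \<Rightarrow> real)
                    \<Rightarrow> (real^'n \<Rightarrow> real) \<Rightarrow> real" where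
  "Jfun s1 s2 V g u =
     enn2real (gag2 s1 u) / 2 + enn2real (gag2 s2 u) / 2
     + (\<integral>x. V x * (u x)\<^sup>2 \<partial>lborel) / 2
     - (\<integral>x. Gprim g (u x) \<partial>lborel)"

text \<open>The Pohozaev functional P; gradV is the (a.e.) gradient of V.\<close>
definition Pfun :: "real \<Rightarrow> real \<Rightarrow> (real^'n \<Rightarrow> real^'n) \<Rightarrow> (real \<Rightarrow> real)
                    \<Rightarrow> (real^'n \<Rightarrow> real) \<Rightarrow> real" where
  "Pfun s1 s2 gradV g u =
     s1 * enn2real (gag2 s1 u) + s2 * enn2real (gag2 s2 u)
     - (\<integral>x. (gradV x \<bullet> x) * (u x)\<^sup>2 \<partial>lborel) / 2
     - real CARD('n) * (\<integral>x. Gtil g (u x) \<partial>lborel)"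

definition Pa :: "real \<Rightarrow> real \<Rightarrow> real \<Rightarrow> (real^'n \<Rightarrow> real^'n) \<Rightarrow> (real \<Rightarrow> real)
                  \<Rightarrow> (real^'n \<Rightarrow> real) set" where
  "Pa s1 s2 a gradV g = {u \<in> Sa s1 s2 a. Pfun s1 s2 gradV g u = 0}"

end

theory Submission
  imports Defs
begin

theorem corollary4p2:
  fixes s1 s2 a \<alpha> \<beta> \<sigma>1 \<sigma>2 \<sigma>3 :: real
    and V :: "real^'n \<Rightarrow> real"
    and gradV gradW :: "real^'n \<Rightarrow> real^'n"
    and g :: "real \<Rightarrow> real"
  defines "d \<equiv> real CARD('n)"
  defines "W \<equiv> (\<lambda>x. (gradV x \<bullet> x) / 2)"
  defines "Y \<equiv> (\<lambda>x. (d * \<alpha> / 2 - d - 1) * W x + gradW x \<bullet> x)"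
  assumes s: "0 < s1" "s1 < s2" "s2 < 1"
    and dim: "2 * s1 < d" "d < 2 * s1 * s2 / (s2 - s1)"
    and a: "a > 0"
    \<comment> \<open>(G1)\<close>
    and G1: "continuous_on UNIV g" "\<And>t. g (- t) = - g t"
    \<comment> \<open>(G2)\<close>
    and G2: "2 + 4 * s2 / d < \<alpha>" "\<alpha> < \<beta>" "\<beta> < 2 * d / (d - 2 * s1)"
      "\<And>t. \<alpha> * Gprim g t \<le> g t * t" "\<And>t. g t * t \<le> \<beta> * Gprim g t"
    \<comment> \<open>(G3)\<close>
    and G3: "\<And>t. \<exists>D. (Gtil g has_real_derivative D) (at t) \<and> D * t \<ge> \<alpha> * Gtil g t"
    \<comment> \<open>(V1)\<close>
    and V1: "(V \<longlongrightarrow> 0) at_infinity" "bdd_above (range V)" "(SUP x. V x) = 0"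
      "0 \<le> \<sigma>1" "\<sigma>1 \<le> (d * (\<alpha> - 2) - 4) / (d * (\<alpha> - 2))"
      "\<And>u. u \<in> Hs s1 s2 \<Longrightarrow> integrable lborel (\<lambda>x. V x * (u x)\<^sup>2) \<and>
          \<bar>\<integral>x. V x * (u x)\<^sup>2 \<partial>lborel\<bar>
            \<le> \<sigma>1 * (enn2real (gag2 s1 u) + enn2real (gag2 s2 u))"
    \<comment> \<open>(V2)\<close>
    and V2: "AE x in lborel. (V has_derivative (\<lambda>h. gradV x \<bullet> h)) (at x)"
      "(W \<longlongrightarrow> 0) at_infinity"
      "0 < \<sigma>2" "\<sigma>2 < s1 - (\<beta> - 2) * d / (2 * \<beta>)"
      "\<sigma>2 < d * (\<alpha> - 2) * (1 - \<sigma>1) / 4 - s2"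
      "\<And>u. u \<in> Hs s1 s2 \<Longrightarrow> integrable lborel (\<lambda>x. W x * (u x)\<^sup>2) \<and>
          \<bar>\<integral>x. W x * (u x)\<^sup>2 \<partial>lborel\<bar>
            \<le> \<sigma>2 * (enn2real (gag2 s1 u) + enn2real (gag2 s2 u))"
    \<comment> \<open>(V3)\<close>
    and V3: "AE x in lborel. (W has_derivative (\<lambda>h. gradW x \<bullet> h)) (at x)"
      "0 \<le> \<sigma>3" "\<sigma>3 \<le> s1\<^sup>2 * (d * \<alpha> / 2 - d - 2 * s2)"
      "\<And>u. u \<in> Hs s1 s2 \<Longrightarrow> integrable lborel (\<lambda>x. Y x * (u x)\<^sup>2) \<and>
          \<bar>\<integral>x. Y x * (u x)\<^sup>2 \<partial>lborel\<bar>
            \<le> \<sigma>3 * (enn2real (gag2 s1 u) + enn2real (gag2 s2 u))"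
  shows "\<forall>M. \<exists>R. \<forall>u \<in> Pa s1 s2 a gradV g.
           enn2real (gag2 s1 u) + enn2real (gag2 s2 u) \<ge> R \<longrightarrow> Jfun s1 s2 V g u \<ge> M"
proof (intro allI)
  fix M :: real
  have d0: "d > 0" using dim s by linarith
  have al2: "\<alpha> > 2" using G2(1) s d0 by (smt (verit) divide_pos_pos)
  have Gnn: "Gprim g t \<ge> 0" for t
  proof -
    have "(\<beta> - \<alpha>) * Gprim g t \<ge> 0" using G2(4)[of t] G2(5)[of t] by (simp add: algebra_simps)
    thus ?thesis using G2(2) by (simp add: zero_le_mult_iff)
  qed
  have Gle: "Gprim g t \<le> 2 / (\<alpha> - 2) * Gtil g t" for t
  proof -
    have "(\<alpha> - 2) * Gprim g t \<le> 2 * Gtil g t" using G2(4)[of t] unfolding Gtil_def by (simp add: algebra_simps)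
    thus ?thesis using al2 by (simp add: field_simps)
  qed
  have Gtnn: "Gtil g t \<ge> 0" for t
  proof -
    have "(\<alpha> - 2) * Gprim g t \<le> 2 * Gtil g t" using G2(4)[of t] unfolding Gtil_def by (simp add: algebra_simps)
    moreover have "(\<alpha> - 2) * Gprim g t \<ge> 0" using al2 Gnn[of t] by simp
    ultimately show ?thesis by linarith
  qed
  have Gtle: "Gtil g t \<le> (\<beta> / 2 - 1) * Gprim g t" for t
    using G2(5)[of t] unfolding Gtil_def by (simp add: algebra_simps)
  have contGt: "continuous_on UNIV (Gtil g)"
  proof (rule continuous_at_imp_continuous_on, intro ballI)
    fix t :: real
    obtain D where "(Gtil g has_real_derivative D) (at t)" using G3[of t] by blast
    thus "isCont (Gtil g) t" by (rule DERIV_isCont)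
  qed
  define k where "k = (1 - \<sigma>1) / 2 - 2 * (s2 + \<sigma>2) / (d * (\<alpha> - 2))"
  have k0: "k > 0"
  proof -
    have "4 * (s2 + \<sigma>2) < d * (\<alpha> - 2) * (1 - \<sigma>1)" using V2(5) by (simp add: field_simps)
    hence "2 * (s2 + \<sigma>2) / (d * (\<alpha> - 2)) < (1 - \<sigma>1) / 2" using d0 al2
      by (simp add: field_simps)
    thus ?thesis unfolding k_def by linarith
  qed
  show "\<exists>R. \<forall>u \<in> Pa s1 s2 a gradV g.
           enn2real (gag2 s1 u) + enn2real (gag2 s2 u) \<ge> R \<longrightarrow> Jfun s1 s2 V g u \<ge> M"
  proof (intro exI ballI impI)
    fix u assume uP: "u \<in> Pa s1 s2 a gradV g"
    assume SR: "enn2real (gag2 s1 u) + enn2real (gag2 s2 u) \<ge> M / k"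
    define A1 where "A1 = enn2real (gag2 s1 u)"
    define A2 where "A2 = enn2real (gag2 s2 u)"
    have A1: "A1 \<ge> 0" and A2: "A2 \<ge> 0" unfolding A1_def A2_def by auto
    have uH: "u \<in> Hs s1 s2" using uP unfolding Pa_def Sa_def by auto
    have um: "u \<in> borel_measurable lborel" using uH unfolding Hs_def by auto
    have P0: "Pfun s1 s2 gradV g u = 0" using uP unfolding Pa_def by auto
    have Weq: "(\<integral>x. (gradV x \<bullet> x) * (u x)\<^sup>2 \<partial>lborel) / 2 = (\<integral>x. W x * (u x)\<^sup>2 \<partial>lborel)"
    proof -
      have "(\<integral>x. W x * (u x)\<^sup>2 \<partial>lborel) = (\<integral>x. ((gradV x \<bullet> x) * (u x)\<^sup>2) / 2 \<partial>lborel)"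
        unfolding W_def by (simp add: field_simps)
      also have "\<dots> = (\<integral>x. (gradV x \<bullet> x) * (u x)\<^sup>2 \<partial>lborel) / 2" by simp
      finally show ?thesis by simp
    qed
    have Wb: "\<bar>\<integral>x. W x * (u x)\<^sup>2 \<partial>lborel\<bar> \<le> \<sigma>2 * (A1 + A2)"
      using V2(6)[OF uH] unfolding A1_def A2_def by blast
    have Vb: "\<bar>\<integral>x. V x * (u x)\<^sup>2 \<partial>lborel\<bar> \<le> \<sigma>1 * (A1 + A2)"
      using V1(6)[OF uH] unfolding A1_def A2_def by blast
    have Peq: "d * (\<integral>x. Gtil g (u x) \<partial>lborel) = s1 * A1 + s2 * A2 - (\<integral>x. W x * (u x)\<^sup>2 \<partial>lborel)"
      using P0 Weq unfolding Pfun_def A1_def A2_def d_def by linarith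
    have "s1 * A1 \<le> s2 * A1" using s A1 by (simp add: mult_right_mono)
    hence "d * (\<integral>x. Gtil g (u x) \<partial>lborel) \<le> (s2 + \<sigma>2) * (A1 + A2)"
      using Peq Wb by (simp add: algebra_simps) 
    hence Gtb: "(\<integral>x. Gtil g (u x) \<partial>lborel) \<le> (s2 + \<sigma>2) * (A1 + A2) / d"
      using d0 by (simp add: field_simps)
    have Gi: "(\<integral>x. Gprim g (u x) \<partial>lborel) \<le> 2 / (\<alpha> - 2) * (\<integral>x. Gtil g (u x) \<partial>lborel)"
    proof (cases "integrable lborel (\<lambda>x. Gprim g (u x))")
      case True
      have mt: "(\<lambda>x. Gtil g (u x)) \<in> borel_measurable lborel"
        using borel_measurable_continuous_on[OF contGt um] by simp
      have it: "integrable lborel (\<lambda>x. Gtil g (u x))"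
        using True mt Gtle Gtnn Gnn al2
      proof -
        have "integrable lborel (\<lambda>x. (\<beta> / 2 - 1) * Gprim g (u x))" using True by simp
        moreover have "AE x in lborel. norm (Gtil g (u x)) \<le> norm ((\<beta> / 2 - 1) * Gprim g (u x))"
          using Gtle Gtnn by (auto intro!: AE_I2 simp: abs_le_iff) (smt (verit) Gtle Gtnn)+
        ultimately show ?thesis using mt Bochner_Integration.integrable_bound by blast
      qed
      have "(\<integral>x. Gprim g (u x) \<partial>lborel) \<le> (\<integral>x. 2 / (\<alpha> - 2) * Gtil g (u x) \<partial>lborel)"
        using True it Gle by (intro integral_mono) (auto intro!: integrable_mult_right)
      thus ?thesis by simp
    next
      case False
      hence "(\<integral>x. Gprim g (u x) \<partial>lborel) = 0" by (simp add: not_integrable_integral_eq)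
      moreover have "(\<integral>x. Gtil g (u x) \<partial>lborel) \<ge> 0" using Gtnn by (simp add: integral_nonneg_AE)
      ultimately show ?thesis using al2 by simp
    qed
    have Gb: "(\<integral>x. Gprim g (u x) \<partial>lborel) \<le> 2 * (s2 + \<sigma>2) / (d * (\<alpha> - 2)) * (A1 + A2)"
    proof -
      have "2 / (\<alpha> - 2) * (\<integral>x. Gtil g (u x) \<partial>lborel) \<le> 2 / (\<alpha> - 2) * ((s2 + \<sigma>2) * (A1 + A2) / d)"
        using Gtb al2 by (intro mult_left_mono) auto
      also have "\<dots> = 2 * (s2 + \<sigma>2) / (d * (\<alpha> - 2)) * (A1 + A2)" using d0 al2 by (simp add: field_simps)
      finally show ?thesis using Gi by linarith
    qed
    have J: "Jfun s1 s2 V g u \<ge> k * (A1 + A2)"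
    proof -
      have "Jfun s1 s2 V g u = A1 / 2 + A2 / 2 + (\<integral>x. V x * (u x)\<^sup>2 \<partial>lborel) / 2 - (\<integral>x. Gprim g (u x) \<partial>lborel)"
        unfolding Jfun_def A1_def A2_def by simp
      define S where "S = A1 + A2"
      define c where "c = 2 * (s2 + \<sigma>2) / (d * (\<alpha> - 2))"
      have Gb': "(\<integral>x. Gprim g (u x) \<partial>lborel) \<le> c * S" using Gb unfolding c_def S_def .
      have Vb': "- (\<integral>x. V x * (u x)\<^sup>2 \<partial>lborel) \<le> \<sigma>1 * S" using Vb unfolding S_def by linarith
      have "k * S = S / 2 - \<sigma>1 * S / 2 - c * S" unfolding k_def c_def by (simp add: algebra_simps add_divide_distrib diff_divide_distrib)
      moreover have "A1 / 2 + A2 / 2 = S / 2" unfolding S_def by simp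
      ultimately show ?thesis using Gb' Vb' \<open>Jfun s1 s2 V g u = _\<close> unfolding S_def[symmetric] by linarith
    qed
    have "M \<le> k * (A1 + A2)" using SR k0 unfolding A1_def A2_def by (simp add: field_simps)
    thus "Jfun s1 s2 V g u \<ge> M" using J by linarith
  qed
qed

end
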